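(* For all $n \geq 2$ and $1 \leq i \leq n$, $$a_{n,i}(p,q)=p^iq\sum_{j=i}^{n-1}a_{n-1,j}(p,q)+p^iq\sum_{j=1}^{i-1}q^{i-j}a_{n-1,j}(p,q),$$ and $a_{1,1}(p,q)=pq^2$.
   Context: An inversion sequence of length $n$ is a sequence $\rho=\rho_1\cdots\rho_n$ of integers with $1\le \rho_i\le i$ for all $1\le i\le n$. Let $I_n$ be the set of inversion sequences of length $n$ and $I_{n,i}$ the subset of those with last letter $\rho_n=i$. Each $\rho$ is represented as a bargraph whose $i$-th column consists of $\rho_i$ unit cells standing on the $x$-axis. The area of $\rho$ is $\mathrm{area}(\rho)=\rho_1+\cdots+\rho_n$, and the semi-perimeter $\mathrm{sper}(\rho)$ is half the perimeter of the bargraph (the bottom boundary on the $x$-axis included); equivalently $\mathrm{sper}(\rho)=n+\rho_1+\sum_{i=1}^{n-1}\max(\rho_{i+1}-\rho_i,0)$. Define $a_{n,i}(p,q)=\sum_{\rho\in I_{n,i}}p^{\mathrm{area}(\rho)}q^{\mathrm{sper}(\rho)}$. *)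

theory Defs
  imports Main
begin

text \<open>Inversion sequences of length n, as lists rho = [rho_1, ..., rho_n]
  (list index k corresponds to position k+1), with 1 <= rho_i <= i.\<close>
definition inv_seqs :: "nat \<Rightarrow> nat list set" where
  "inv_seqs n = {xs. length xs = n \<and> (\<forall>k<n. 1 \<le> xs ! k \<and> xs ! k \<le> k + 1)}"

definition inv_seqs_last :: "nat \<Rightarrow> nat \<Rightarrow> nat list set" where
  "inv_seqs_last n i = {xs \<in> inv_seqs n. xs \<noteq> [] \<and> last xs = i}"

definition area :: "nat list \<Rightarrow> nat" where
  "area xs = sum_list xs"

text \<open>Semi-perimeter: n + rho_1 + sum_{i=1}^{n-1} max(rho_{i+1} - rho_i, 0)
  (natural-number subtraction truncates at 0, giving the max).\<close>
definition sper :: "nat list \<Rightarrow> nat" where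
  "sper xs = length xs + (if xs = [] then 0 else hd xs)
     + (\<Sum>k<length xs - 1. xs ! (k + 1) - xs ! k)"

definition a_gf :: "nat \<Rightarrow> nat \<Rightarrow> 'a :: comm_semiring_1 \<Rightarrow> 'a \<Rightarrow> 'a" where
  "a_gf n i p q = (\<Sum>xs\<in>inv_seqs_last n i. p ^ area xs * q ^ sper xs)"

end

theory Submission
  imports Defs
begin

lemma sper_snoc:
  assumes "ys \<noteq> []"
  shows "sper (ys @ [i]) = sper ys + 1 + (i - last ys)"
proof -
  obtain m where m: "length ys = Suc m" using assms by (cases ys) auto
  have "(\<Sum>k<length (ys@[i]) - 1. (ys@[i]) ! (k + 1) - (ys@[i]) ! k)
      = (\<Sum>k<m. (ys@[i]) ! (k + 1) - (ys@[i]) ! k) + ((ys@[i]) ! (Suc m) - (ys@[i]) ! m)"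
    using m by simp
  also have "(\<Sum>k<m. (ys@[i]) ! (k + 1) - (ys@[i]) ! k) = (\<Sum>k<m. ys ! (k + 1) - ys ! k)"
    by (rule sum.cong) (auto simp: nth_append m)
  also have "(ys@[i]) ! (Suc m) - (ys@[i]) ! m = i - last ys"
    using m assms by (simp add: nth_append last_conv_nth)
  finally show ?thesis using assms m unfolding sper_def by simp
qed

lemma area_snoc: "area (ys @ [i]) = area ys + i"
  by (simp add: area_def)

lemma finite_inv_seqs: "finite (inv_seqs n)"
proof -
  have "inv_seqs n \<subseteq> {xs. set xs \<subseteq> {0..n} \<and> length xs = n}"
    by (auto simp: inv_seqs_def in_set_conv_nth) (metis Suc_leI le_trans less_Suc_eq_le)
  moreover have "finite {xs. set xs \<subseteq> {0..n} \<and> length xs = n}"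
    by (rule finite_lists_length_eq) simp
  ultimately show ?thesis by (rule finite_subset)
qed

lemma finite_inv_seqs_last: "finite (inv_seqs_last n i)"
  unfolding inv_seqs_last_def using finite_inv_seqs by simp

lemma inv_seqs_last_Suc:
  assumes "1 \<le> m" "1 \<le> i" "i \<le> Suc m"
  shows "inv_seqs_last (Suc m) i = (\<lambda>ys. ys @ [i]) ` (\<Union>j\<in>{1..m}. inv_seqs_last m j)"
proof
  show "inv_seqs_last (Suc m) i \<subseteq> (\<lambda>ys. ys @ [i]) ` (\<Union>j\<in>{1..m}. inv_seqs_last m j)"
  proof
    fix xs assume xs: "xs \<in> inv_seqs_last (Suc m) i"
    then have len: "length xs = Suc m" and b: "\<forall>k<Suc m. 1 \<le> xs ! k \<and> xs ! k \<le> k + 1"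
      and l: "last xs = i" and ne: "xs \<noteq> []"
      by (auto simp: inv_seqs_last_def inv_seqs_def)
    define ys where "ys = butlast xs"
    have xe: "xs = ys @ [i]" using ne l ys_def append_butlast_last_id by metis
    have ly: "length ys = m" using len ys_def by simp
    have yb: "\<forall>k<m. 1 \<le> ys ! k \<and> ys ! k \<le> k + 1"
    proof (intro allI impI)
      fix k assume "k < m"
      then show "1 \<le> ys ! k \<and> ys ! k \<le> k + 1"
        using b[rule_format, of k] xe ly by (simp add: nth_append)
    qed
    have yne: "ys \<noteq> []" using ly assms by auto
    have "last ys = ys ! (m - 1)" using yne ly by (simp add: last_conv_nth)
    then have "1 \<le> last ys \<and> last ys \<le> m" using yb[rule_format, of "m-1"] assms by auto
    moreover have "ys \<in> inv_seqs_last m (last ys)"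
      using ly yb yne by (simp add: inv_seqs_last_def inv_seqs_def)
    ultimately have "ys \<in> (\<Union>j\<in>{1..m}. inv_seqs_last m j)" by auto
    then show "xs \<in> (\<lambda>ys. ys @ [i]) ` (\<Union>j\<in>{1..m}. inv_seqs_last m j)"
      using xe by (rule rev_image_eqI)
  qed
next
  show "(\<lambda>ys. ys @ [i]) ` (\<Union>j\<in>{1..m}. inv_seqs_last m j) \<subseteq> inv_seqs_last (Suc m) i"
  proof
    fix xs assume "xs \<in> (\<lambda>ys. ys @ [i]) ` (\<Union>j\<in>{1..m}. inv_seqs_last m j)"
    then obtain ys j where xe: "xs = ys @ [i]" and ys: "ys \<in> inv_seqs_last m j" by auto
    then have ly: "length ys = m" and yb: "\<forall>k<m. 1 \<le> ys ! k \<and> ys ! k \<le> k + 1"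
      by (auto simp: inv_seqs_last_def inv_seqs_def)
    have "\<forall>k<Suc m. 1 \<le> xs ! k \<and> xs ! k \<le> k + 1"
    proof (intro allI impI)
      fix k assume k: "k < Suc m"
      show "1 \<le> xs ! k \<and> xs ! k \<le> k + 1"
      proof (cases "k < m")
        case True then show ?thesis using yb xe ly by (simp add: nth_append)
      next
        case False then have "k = m" using k by simp
        then show ?thesis using xe ly assms by (simp add: nth_append)
      qed
    qed
    then show "xs \<in> inv_seqs_last (Suc m) i"
      using xe ly by (simp add: inv_seqs_last_def inv_seqs_def)
  qed
qed

lemma a_gf_rec:
  fixes p q :: "'a :: comm_semiring_1"
  assumes "1 \<le> m" "1 \<le> i" "i \<le> Suc m"
  shows "a_gf (Suc m) i p q = (\<Sum>j=1..m. p ^ i * q * q ^ (i - j) * a_gf m j p q)"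
proof -
  have inj: "inj_on (\<lambda>ys. ys @ [i]) (\<Union>j\<in>{1..m}. inv_seqs_last m j)"
    by (auto simp: inj_on_def)
  have "a_gf (Suc m) i p q = (\<Sum>xs\<in>(\<Union>j\<in>{1..m}. inv_seqs_last m j). p ^ area (xs @ [i]) * q ^ sper (xs @ [i]))"
    unfolding a_gf_def inv_seqs_last_Suc[OF assms] using sum.reindex[OF inj] by simp
  also have "\<dots> = (\<Sum>j=1..m. \<Sum>xs\<in>inv_seqs_last m j. p ^ area (xs @ [i]) * q ^ sper (xs @ [i]))"
    by (rule sum.UNION_disjoint) (auto simp: finite_inv_seqs_last[unfolded inv_seqs_last_def] inv_seqs_last_def)
  also have "\<dots> = (\<Sum>j=1..m. p ^ i * q * q ^ (i - j) * a_gf m j p q)"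
  proof (rule sum.cong[OF refl])
    fix j assume "j \<in> {1..m}"
    have "(\<Sum>xs\<in>inv_seqs_last m j. p ^ area (xs @ [i]) * q ^ sper (xs @ [i]))
        = (\<Sum>xs\<in>inv_seqs_last m j. p ^ i * q * q ^ (i - j) * (p ^ area xs * q ^ sper xs))"
    proof (rule sum.cong[OF refl])
      fix xs assume "xs \<in> inv_seqs_last m j"
      then have "xs \<noteq> []" "last xs = j" by (auto simp: inv_seqs_last_def)
      then show "p ^ area (xs @ [i]) * q ^ sper (xs @ [i]) = p ^ i * q * q ^ (i - j) * (p ^ area xs * q ^ sper xs)"
        by (simp add: sper_snoc area_snoc power_add mult_ac)
    qed
    then show "(\<Sum>xs\<in>inv_seqs_last m j. p ^ area (xs @ [i]) * q ^ sper (xs @ [i]))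
        = p ^ i * q * q ^ (i - j) * a_gf m j p q"
      by (simp add: a_gf_def sum_distrib_left)
  qed
  finally show ?thesis .
qed

lemma a11: "a_gf 1 1 p q = p * q ^ 2"
proof -
  have "inv_seqs_last 1 1 = {[1]}"
    by (auto simp: inv_seqs_last_def inv_seqs_def length_Suc_conv)
  then show ?thesis by (simp add: a_gf_def area_def sper_def numeral_2_eq_2)
qed

theorem lemma2p1:
  fixes p q :: "'a :: comm_semiring_1"
  shows "(\<forall>n i. 2 \<le> n \<longrightarrow> 1 \<le> i \<longrightarrow> i \<le> n \<longrightarrow>
            a_gf n i p q =
              p ^ i * q * (\<Sum>j = i..n - 1. a_gf (n - 1) j p q)
            + p ^ i * q * (\<Sum>j = 1..i - 1. q ^ (i - j) * a_gf (n - 1) j p q))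
         \<and> a_gf 1 1 p q = p * q ^ 2"
proof (intro conjI allI impI)
  fix n i :: nat assume n: "2 \<le> n" and i: "1 \<le> i" "i \<le> n"
  obtain m where nm: "n = Suc m" and m: "1 \<le> m" using n by (cases n) auto
  have split: "{1..m} = {1..i-1} \<union> {i..m}" using i nm by auto
  have "a_gf n i p q = (\<Sum>j=1..m. p ^ i * q * q ^ (i - j) * a_gf m j p q)"
    using a_gf_rec[OF m, of i p q] i nm by simp
  also have "\<dots> = (\<Sum>j=1..i-1. p ^ i * q * q ^ (i - j) * a_gf m j p q)
                + (\<Sum>j=i..m. p ^ i * q * q ^ (i - j) * a_gf m j p q)"
    unfolding split by (rule sum.union_disjoint) auto
  also have "(\<Sum>j=i..m. p ^ i * q * q ^ (i - j) * a_gf m j p q) = (\<Sum>j=i..m. p ^ i * q * a_gf m j p q)"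
    by (rule sum.cong) auto
  finally show "a_gf n i p q =
              p ^ i * q * (\<Sum>j = i..n - 1. a_gf (n - 1) j p q)
            + p ^ i * q * (\<Sum>j = 1..i - 1. q ^ (i - j) * a_gf (n - 1) j p q)"
    using nm by (simp add: sum_distrib_left mult_ac add_ac)
next
  show "a_gf 1 1 p q = p * q ^ 2" by (rule a11)
qed

end
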